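(* Let $\{\varphi_n\}_{n\ge1}$ be an orthonormal system on $[0,1]$ and let $\{d_n\}$ be a sequence of real numbers with $d_n=O\!\left(\frac{\sqrt{n}}{\log^2(n+1)}\right)$. For a real sequence $a=\{a_n\}\in \ell_2$ put $$Q_n(d,a,x)=\sum_{k=1}^{n} d_k a_k \log k\,\varphi_k(x),\qquad U_n(f)=\int_0^1 f(x)Q_n(d,a,x)\,dx,\qquad B_n(d,a)=\max_{1\le i<n}\left|\int_0^{i/n}Q_n(d,a,x)\,dx\right|.$$ Suppose that for every $a\in\ell_2$ we have $B_n(d,a)=O(1)$ as $n\to\infty$. Then for every function $f\in BV$ and every $a\in \ell_2$, the sequence $\{U_n(f)\}$ is bounded, i.e. $\limsup_{n\to\infty}|U_n(f)|<+\infty$.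
   Context: $BV$ denotes the class of (finite-valued) functions of bounded variation on $[0,1]$. An orthonormal system (ONS) on $[0,1]$ is a sequence of functions in $L_2(0,1)$ that is orthonormal in $L_2(0,1)$. $\log$ denotes the logarithm (so $\log 1=0$). The sequence of functionals $\{U_n\}$ is called bounded on a function space $V$ if for every $a\in\ell_2$ one has $\limsup_{n\to\infty}|U_n(f)|<+\infty$. *)

theory Defs
  imports "HOL-Analysis.Analysis" "HOL-Library.Landau_Symbols"
begin

definition BV01 :: "(real \<Rightarrow> real) \<Rightarrow> bool" where
  "BV01 f \<longleftrightarrow> (\<exists>V. \<forall>xs. sorted xs \<and> set xs \<subseteq> {0..1} \<longrightarrow>
      (\<Sum>i<length xs - 1. \<bar>f (xs ! Suc i) - f (xs ! i)\<bar>) \<le> V)"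

definition ONS01 :: "(nat \<Rightarrow> real \<Rightarrow> real) \<Rightarrow> bool" where
  "ONS01 \<phi> \<longleftrightarrow>
     (\<forall>n\<ge>1. \<phi> n \<in> borel_measurable lborel \<and>
              set_integrable lborel {0..1} (\<lambda>x. (\<phi> n x)\<^sup>2)) \<and>
     (\<forall>n\<ge>1. \<forall>m\<ge>1. (LINT x:{0..1}|lborel. \<phi> n x * \<phi> m x) = (if n = m then 1 else 0))"

definition ell2 :: "(nat \<Rightarrow> real) set" where
  "ell2 = {a. summable (\<lambda>n. (a n)\<^sup>2)}"

definition Qfun :: "(nat \<Rightarrow> real \<Rightarrow> real) \<Rightarrow> (nat \<Rightarrow> real) \<Rightarrow> (nat \<Rightarrow> real) \<Rightarrow> nat \<Rightarrow> real \<Rightarrow> real" where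
  "Qfun \<phi> d a n x = (\<Sum>k=1..n. d k * a k * ln (real k) * \<phi> k x)"

definition Ufun :: "(nat \<Rightarrow> real \<Rightarrow> real) \<Rightarrow> (nat \<Rightarrow> real) \<Rightarrow> (nat \<Rightarrow> real) \<Rightarrow> nat \<Rightarrow> (real \<Rightarrow> real) \<Rightarrow> real" where
  "Ufun \<phi> d a n f = (LINT x:{0..1}|lborel. f x * Qfun \<phi> d a n x)"

text \<open>B_n; for n = 1 the maximum is over an empty set, and we set it to 0 (irrelevant for O(1)).\<close>
definition Bfun :: "(nat \<Rightarrow> real \<Rightarrow> real) \<Rightarrow> (nat \<Rightarrow> real) \<Rightarrow> (nat \<Rightarrow> real) \<Rightarrow> nat \<Rightarrow> real" where
  "Bfun \<phi> d a n = (if n \<ge> 2 then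
      Max ((\<lambda>i. \<bar>LINT x:{0..real i / real n}|lborel. Qfun \<phi> d a n x\<bar>) ` {1..<n}) else 0)"

end

theory Submission
  imports Defs
begin


definition vs :: "(real \<Rightarrow> real) \<Rightarrow> real list \<Rightarrow> real" where
  "vs f xs = (\<Sum>i<length xs - 1. \<bar>f (xs ! Suc i) - f (xs ! i)\<bar>)"

lemma vs_snoc: "vs f (xs @ [z]) = vs f xs + (if xs = [] then 0 else \<bar>f z - f (last xs)\<bar>)"
proof (cases xs rule: rev_cases)
  case Nil then show ?thesis by (simp add: vs_def)
next
  case (snoc ys y)
  have "vs f (xs @ [z]) = (\<Sum>i<Suc (length ys). \<bar>f ((xs@[z]) ! Suc i) - f ((xs@[z]) ! i)\<bar>)"
    by (simp add: vs_def snoc)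
  also have "\<dots> = (\<Sum>i<length ys. \<bar>f ((xs@[z]) ! Suc i) - f ((xs@[z]) ! i)\<bar>) + \<bar>f z - f y\<bar>"
    by (simp add: snoc nth_append)
  also have "(\<Sum>i<length ys. \<bar>f ((xs@[z]) ! Suc i) - f ((xs@[z]) ! i)\<bar>) = vs f xs"
    unfolding vs_def by (rule sum.cong) (auto simp: snoc nth_append)
  finally show ?thesis by (simp add: snoc)
qed

definition vf :: "(real \<Rightarrow> real) \<Rightarrow> real \<Rightarrow> real" where
  "vf f t = Sup {vs f xs | xs. sorted xs \<and> set xs \<subseteq> {0..t}}"

lemma vf_props:
  assumes "BV01 f"
  obtains V where "\<And>t. t \<le> 1 \<Longrightarrow> 0 \<le> vf f t" "\<And>t. t \<le> 1 \<Longrightarrow> vf f t \<le> V"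
    "\<And>x y. 0 \<le> x \<Longrightarrow> x \<le> y \<Longrightarrow> y \<le> 1 \<Longrightarrow> vf f x + \<bar>f y - f x\<bar> \<le> vf f y"
proof -
  from assms obtain V where V: "\<And>xs. sorted xs \<Longrightarrow> set xs \<subseteq> {0..1} \<Longrightarrow> vs f xs \<le> V"
    unfolding BV01_def vs_def by blast
  define S where "S t = {vs f xs | xs. sorted xs \<and> set xs \<subseteq> {0..t}}" for t
  have ne: "S t \<noteq> {}" for t 
  proof - have "vs f [] \<in> S t" unfolding S_def by auto then show ?thesis by auto qed
  have bdd: "bdd_above (S t)" if "t \<le> 1" for t
    unfolding bdd_above_def
  proof (intro exI ballI)
    fix s assume "s \<in> S t"
    then obtain xs where "s = vs f xs" "sorted xs" "set xs \<subseteq> {0..t}" unfolding S_def by blast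
    moreover have "set xs \<subseteq> {0..1}" using calculation that by auto
    ultimately show "s \<le> V" using V by blast
  qed
  have vfS: "vf f t = Sup (S t)" for t by (simp add: vf_def S_def)
  have 1: "0 \<le> vf f t" if "t \<le> 1" for t
  proof -
    have "vs f [] \<in> S t" unfolding S_def by auto
    then have "vs f [] \<le> Sup (S t)" using cSup_upper[OF _ bdd[OF that]] by blast
    then show ?thesis unfolding vfS by (simp add: vs_def)
  qed
  have 2: "vf f t \<le> V" if "t \<le> 1" for t
    unfolding vfS
  proof (rule cSup_least[OF ne])
    fix s assume "s \<in> S t"
    then obtain xs where "s = vs f xs" "sorted xs" "set xs \<subseteq> {0..t}" unfolding S_def by blast
    moreover have "set xs \<subseteq> {0..1}" using calculation that by auto
    ultimately show "s \<le> V" using V by blast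
  qed
  have 3: "vf f x + \<bar>f y - f x\<bar> \<le> vf f y" if "0 \<le> x" "x \<le> y" "y \<le> 1" for x y
  proof -
    have "vf f x \<le> vf f y - \<bar>f y - f x\<bar>"
      unfolding vfS
    proof (rule cSup_least[OF ne])
      fix s assume "s \<in> S x"
      then obtain xs where xs: "s = vs f xs" "sorted xs" "set xs \<subseteq> {0..x}" by (auto simp: S_def)
      have "sorted ((xs @ [x]) @ [y])" using xs that by (force simp: sorted_append)
      moreover have "set ((xs @ [x]) @ [y]) \<subseteq> {0..y}" using xs that by force
      ultimately have "vs f ((xs @ [x]) @ [y]) \<in> S y" unfolding S_def by blast
      then have "vs f ((xs @ [x]) @ [y]) \<le> Sup (S y)" using cSup_upper[OF _ bdd[OF that(3)]] by blast
      moreover have "vs f ((xs @ [x]) @ [y]) \<ge> s + \<bar>f y - f x\<bar>"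
        unfolding vs_snoc by (simp add: xs)
      ultimately show "s \<le> Sup (S y) - \<bar>f y - f x\<bar>" by simp
    qed
    then show ?thesis by simp
  qed
  show ?thesis using that 1 2 3 by blast
qed


lemma absprod_le: "\<bar>(a::real) * b\<bar> \<le> a\<^sup>2 + b\<^sup>2"
proof -
  have "2*\<bar>a\<bar>*\<bar>b\<bar> \<le> \<bar>a\<bar>\<^sup>2+\<bar>b\<bar>\<^sup>2" by (rule sum_squares_bound)
  moreover have "0 \<le> \<bar>a\<bar>*\<bar>b\<bar>" by simp
  ultimately show ?thesis unfolding abs_mult power2_abs by linarith
qed
lemma abs_le_sq: "\<bar>(a::real)\<bar> \<le> 1 + a\<^sup>2"
  using absprod_le[of 1 a] by simp


lemma ons_sq_int:
  assumes "ONS01 \<phi>" "k \<ge> 1"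
  shows "integrable lborel (\<lambda>x. indicator {0..1::real} x * (\<phi> k x)\<^sup>2)"
    and "\<phi> k \<in> borel_measurable lborel"
  using assms unfolding ONS01_def set_integrable_def by auto

lemma ons_prod_int:
  assumes "ONS01 \<phi>" "j \<ge> 1" "k \<ge> 1"
  shows "integrable lborel (\<lambda>x. indicator {0..1::real} x * (\<phi> j x * \<phi> k x))"
    and "integral\<^sup>L lborel (\<lambda>x. indicator {0..1::real} x * (\<phi> j x * \<phi> k x)) = (if j = k then 1 else 0)"
proof -
  note m = ons_sq_int(2)[OF assms(1)]
  have "integrable lborel (\<lambda>x. indicator {0..1::real} x * (\<phi> j x)\<^sup>2 + indicator {0..1::real} x * (\<phi> k x)\<^sup>2)"
    using ons_sq_int(1)[OF assms(1,2)] ons_sq_int(1)[OF assms(1,3)] by auto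
  then show 1: "integrable lborel (\<lambda>x. indicator {0..1::real} x * (\<phi> j x * \<phi> k x))"
  proof (rule Bochner_Integration.integrable_bound)
    show "(\<lambda>x. indicator {0..1::real} x * (\<phi> j x * \<phi> k x)) \<in> borel_measurable lborel"
      using m[OF assms(2)] m[OF assms(3)] by measurable
    show "AE x in lborel. norm (indicator {0..1::real} x * (\<phi> j x * \<phi> k x))
        \<le> norm (indicator {0..1::real} x * (\<phi> j x)\<^sup>2 + indicator {0..1::real} x * (\<phi> k x)\<^sup>2)"
    proof (rule AE_I2)
      fix x
      have "\<bar>\<phi> j x * \<phi> k x\<bar> \<le> (\<phi> j x)\<^sup>2 + (\<phi> k x)\<^sup>2"
        by (rule absprod_le)
      then show "norm (indicator {0..1::real} x * (\<phi> j x * \<phi> k x))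
        \<le> norm (indicator {0..1::real} x * (\<phi> j x)\<^sup>2 + indicator {0..1::real} x * (\<phi> k x)\<^sup>2)"
        by (auto split: split_indicator)
    qed
  qed
  show "integral\<^sup>L lborel (\<lambda>x. indicator {0..1::real} x * (\<phi> j x * \<phi> k x)) = (if j = k then 1 else 0)"
    using assms unfolding ONS01_def set_lebesgue_integral_def by auto
qed

lemma ons_int:
  assumes "ONS01 \<phi>" "k \<ge> 1"
  shows "integrable lborel (\<lambda>x. indicator {0..1::real} x * \<phi> k x)"
proof -
  have "integrable lborel (\<lambda>x. indicator {0..1::real} x + indicator {0..1::real} x * (\<phi> k x)\<^sup>2)"
  proof (rule Bochner_Integration.integrable_add)
    show "integrable lborel (indicat_real {0..1::real})" by (rule integrable_real_indicator) auto
  qed (rule ons_sq_int(1)[OF assms])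
  then show ?thesis
  proof (rule Bochner_Integration.integrable_bound)
    show "(\<lambda>x. indicator {0..1::real} x * \<phi> k x) \<in> borel_measurable lborel"
      using ons_sq_int(2)[OF assms] by measurable
    show "AE x in lborel. norm (indicator {0..1::real} x * \<phi> k x)
        \<le> norm (indicator {0..1::real} x + indicator {0..1::real} x * (\<phi> k x)\<^sup>2)"
    proof (rule AE_I2)
      fix x
      have "\<bar>\<phi> k x\<bar> \<le> 1 + (\<phi> k x)\<^sup>2"
        by (rule abs_le_sq)
      then show "norm (indicator {0..1::real} x * \<phi> k x)
        \<le> norm (indicator {0..1::real} x + indicator {0..1::real} x * (\<phi> k x)\<^sup>2)"
        by (auto split: split_indicator)
    qed
  qed
qed


lemma Q_meas:
  assumes "ONS01 \<phi>"
  shows "Qfun \<phi> d a n \<in> borel_measurable lborel"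
proof -
  have "(\<lambda>x. \<Sum>k=1..n. d k * a k * ln (real k) * \<phi> k x) \<in> borel_measurable lborel"
    using ons_sq_int(2)[OF assms] by (intro borel_measurable_sum) auto
  then show ?thesis unfolding Qfun_def[abs_def] by simp
qed

lemma Q_int:
  assumes "ONS01 \<phi>"
  shows "integrable lborel (\<lambda>x. indicator {0..1::real} x * Qfun \<phi> d a n x)"
proof -
  have "integrable lborel (\<lambda>x. \<Sum>k\<in>{1..n}. d k * a k * ln (real k) * (indicator {0..1::real} x * \<phi> k x))"
    using ons_int[OF assms] by (intro Bochner_Integration.integrable_sum integrable_mult_right) auto
  then show ?thesis unfolding Qfun_def by (simp add: sum_distrib_left mult_ac)
qed

lemma Q_sq:
  fixes d a :: "nat \<Rightarrow> real"
  assumes "ONS01 \<phi>"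
  defines "c \<equiv> \<lambda>k. d k * a k * ln (real k)"
  shows "integrable lborel (\<lambda>x. indicator {0..1::real} x * (Qfun \<phi> d a n x)\<^sup>2)"
    and "integral\<^sup>L lborel (\<lambda>x. indicator {0..1::real} x * (Qfun \<phi> d a n x)\<^sup>2) = (\<Sum>k=1..n. (c k)\<^sup>2)"
proof -
  have eq: "(\<lambda>x. indicator {0..1::real} x * (Qfun \<phi> d a n x)\<^sup>2) =
     (\<lambda>x. \<Sum>j\<in>{1..n}. \<Sum>k\<in>{1..n}. (c j * c k) * (indicator {0..1::real} x * (\<phi> j x * \<phi> k x)))"
  proof
    fix x
    have "Qfun \<phi> d a n x = (\<Sum>k\<in>{1..n}. c k * \<phi> k x)" by (simp add: Qfun_def c_def)
    then have "(Qfun \<phi> d a n x)\<^sup>2 = (\<Sum>j\<in>{1..n}. c j * \<phi> j x) * (\<Sum>k\<in>{1..n}. c k * \<phi> k x)"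
      by (simp add: power2_eq_square)
    also have "\<dots> = (\<Sum>j\<in>{1..n}. \<Sum>k\<in>{1..n}. (c j * \<phi> j x) * (c k * \<phi> k x))"
      by (rule sum_product)
    finally show "indicator {0..1::real} x * (Qfun \<phi> d a n x)\<^sup>2 =
      (\<Sum>j\<in>{1..n}. \<Sum>k\<in>{1..n}. (c j * c k) * (indicator {0..1::real} x * (\<phi> j x * \<phi> k x)))"
      by (simp add: sum_distrib_left mult_ac)
  qed
  show "integrable lborel (\<lambda>x. indicator {0..1::real} x * (Qfun \<phi> d a n x)\<^sup>2)"
    unfolding eq using ons_prod_int(1)[OF assms(1)]
    by (intro Bochner_Integration.integrable_sum integrable_mult_right) auto
  have "integral\<^sup>L lborel (\<lambda>x. indicator {0..1::real} x * (Qfun \<phi> d a n x)\<^sup>2) =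
     (\<Sum>j\<in>{1..n}. \<Sum>k\<in>{1..n}. (c j * c k) * (if j = k then 1 else 0))"
    unfolding eq
  proof (subst Bochner_Integration.integral_sum, goal_cases)
    case (1 j)
    then show ?case using ons_prod_int(1)[OF assms(1)]
      by (intro Bochner_Integration.integrable_sum integrable_mult_right) auto
  next
    case 2
    show ?case
    proof (rule sum.cong[OF refl])
      fix j assume j: "j \<in> {1..n}"
      show "integral\<^sup>L lborel (\<lambda>x. \<Sum>k\<in>{1..n}. (c j * c k) * (indicator {0..1::real} x * (\<phi> j x * \<phi> k x)))
        = (\<Sum>k\<in>{1..n}. (c j * c k) * (if j = k then 1 else 0))"
      proof (subst Bochner_Integration.integral_sum, goal_cases)
        case (1 k)
        then show ?case using ons_prod_int(1)[OF assms(1)] j by (intro integrable_mult_right) auto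
      next
        case 2
        show ?case using ons_prod_int(2)[OF assms(1)] j by (intro sum.cong[OF refl]) auto
      qed
    qed
  qed
  also have "\<dots> = (\<Sum>j\<in>{1..n}. (c j)\<^sup>2)"
  proof (rule sum.cong[OF refl])
    fix j assume "j \<in> {1..n::nat}"
    have "(\<Sum>k\<in>{1..n}. (c j * c k) * (if j = k then 1 else 0)) = (\<Sum>k\<in>{1..n}. if k = j then c j * c j else 0)"
      by (rule sum.cong) auto
    also have "\<dots> = c j * c j" using \<open>j \<in> {1..n}\<close> by (simp add: sum.delta)
    finally show "(\<Sum>k\<in>{1..n}. (c j * c k) * (if j = k then 1 else 0)) = (c j)\<^sup>2"
      by (simp add: power2_eq_square)
  qed
  finally show "integral\<^sup>L lborel (\<lambda>x. indicator {0..1::real} x * (Qfun \<phi> d a n x)\<^sup>2) = (\<Sum>k=1..n. (c k)\<^sup>2)" .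
qed


lemma d_bound:
  fixes d :: "nat \<Rightarrow> real"
  assumes "d \<in> O(\<lambda>n. sqrt (real n) / (ln (real n + 1))\<^sup>2)"
  obtains C where "C \<ge> 0" "\<And>k. k \<ge> 1 \<Longrightarrow> \<bar>d k * ln (real k)\<bar> \<le> C * sqrt (real k)"
proof -
  from assms obtain c where c: "c > 0"
    "eventually (\<lambda>n. norm (d n) \<le> c * norm (sqrt (real n) / (ln (real n + 1))\<^sup>2)) at_top"
    by (rule landau_o.bigE)
  then obtain N where N: "\<And>n. n \<ge> N \<Longrightarrow> \<bar>d n\<bar> \<le> c * \<bar>sqrt (real n) / (ln (real n + 1))\<^sup>2\<bar>"
    unfolding eventually_at_top_linorder by auto
  define C where "C = (\<Sum>k<N. \<bar>d k * ln (real k)\<bar>) + c / ln 2"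
  have ln2: "ln (2::real) > 0" by simp
  have C0: "C \<ge> 0" unfolding C_def using c ln2 by (intro add_nonneg_nonneg sum_nonneg) auto
  have "\<bar>d k * ln (real k)\<bar> \<le> C * sqrt (real k)" if k: "k \<ge> 1" for k
  proof (cases "k < N")
    case True
    have "\<bar>d k * ln (real k)\<bar> \<le> (\<Sum>k<N. \<bar>d k * ln (real k)\<bar>)"
      using True by (intro member_le_sum) auto
    also have "\<dots> \<le> C" unfolding C_def using c ln2 by simp
    also have "C \<le> C * sqrt (real k)" using C0 k by (simp add: mult_le_cancel_left1)
    finally show ?thesis .
  next
    case False
    define L where "L = ln (real k + 1)"
    have L2: "ln 2 \<le> L" unfolding L_def using k by simp
    have Lpos: "L > 0" using L2 ln2 by linarith
    have lnk: "0 \<le> ln (real k)" "ln (real k) \<le> L" unfolding L_def using k by auto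
    have dk: "\<bar>d k\<bar> \<le> c * (sqrt (real k) / L\<^sup>2)"
      using N[of k] False unfolding L_def by simp
    have "\<bar>d k * ln (real k)\<bar> = \<bar>d k\<bar> * ln (real k)" using lnk by (simp add: abs_mult)
    also have "\<dots> \<le> c * (sqrt (real k) / L\<^sup>2) * L"
      using dk lnk by (intro mult_mono) auto
    also have "\<dots> = c * sqrt (real k) / L" using Lpos by (simp add: power2_eq_square field_simps)
    also have "\<dots> \<le> c * sqrt (real k) / ln 2"
      using L2 ln2 c(1) Lpos by (intro divide_left_mono mult_pos_pos mult_nonneg_nonneg) auto
    also have "\<dots> \<le> C * sqrt (real k)"
    proof -
      have "c / ln 2 \<le> C" unfolding C_def by (simp add: sum_nonneg)
      then have "c / ln 2 * sqrt (real k) \<le> C * sqrt (real k)" by (intro mult_right_mono) auto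
      then show ?thesis by simp
    qed
    finally show ?thesis .
  qed
  then show ?thesis using that C0 by blast
qed

lemma sumsq_bound:
  fixes d a :: "nat \<Rightarrow> real"
  assumes "d \<in> O(\<lambda>n. sqrt (real n) / (ln (real n + 1))\<^sup>2)" "a \<in> ell2"
  obtains K where "K > 0" "\<And>n. (\<Sum>k=1..n. (d k * a k * ln (real k))\<^sup>2) \<le> K * real n"
proof -
  obtain C where C: "C \<ge> 0" "\<And>k. k \<ge> 1 \<Longrightarrow> \<bar>d k * ln (real k)\<bar> \<le> C * sqrt (real k)"
    using d_bound[OF assms(1)] by blast
  have sa: "summable (\<lambda>k. (a k)\<^sup>2)" using assms(2) by (simp add: ell2_def)
  define A where "A = (\<Sum>k. (a k)\<^sup>2)"
  define K where "K = C\<^sup>2 * A + 1"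
  have A0: "A \<ge> 0" unfolding A_def using sa by (intro suminf_nonneg) auto
  have "(\<Sum>k=1..n. (d k * a k * ln (real k))\<^sup>2) \<le> K * real n" for n
  proof -
    have "(\<Sum>k=1..n. (d k * a k * ln (real k))\<^sup>2) \<le> (\<Sum>k=1..n. (C\<^sup>2 * real n) * (a k)\<^sup>2)"
    proof (rule sum_mono)
      fix k assume k: "k \<in> {1..n}"
      have "(d k * ln (real k))\<^sup>2 = \<bar>d k * ln (real k)\<bar>\<^sup>2" by simp
      also have "\<dots> \<le> (C * sqrt (real k))\<^sup>2"
        using C(2)[of k] k by (intro power_mono) auto
      also have "\<dots> = C\<^sup>2 * real k" by (simp add: power_mult_distrib)
      also have "\<dots> \<le> C\<^sup>2 * real n" using k by (intro mult_left_mono) auto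
      finally have "(d k * ln (real k))\<^sup>2 \<le> C\<^sup>2 * real n" .
      then have "(d k * ln (real k))\<^sup>2 * (a k)\<^sup>2 \<le> C\<^sup>2 * real n * (a k)\<^sup>2"
        by (intro mult_right_mono) auto
      then show "(d k * a k * ln (real k))\<^sup>2 \<le> (C\<^sup>2 * real n) * (a k)\<^sup>2"
        by (simp add: power_mult_distrib mult_ac)
    qed
    also have "\<dots> = (C\<^sup>2 * real n) * (\<Sum>k=1..n. (a k)\<^sup>2)" by (simp add: sum_distrib_left)
    also have "\<dots> \<le> (C\<^sup>2 * real n) * A"
      unfolding A_def by (intro mult_left_mono sum_le_suminf sa) auto
    also have "\<dots> \<le> K * real n" unfolding K_def using A0 by (simp add: algebra_simps)
    finally show ?thesis .
  qed
  moreover have "K > 0" unfolding K_def using A0 by (simp add: add_nonneg_pos)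
  ultimately show ?thesis using that by blast
qed


definition Jset :: "nat \<Rightarrow> nat \<Rightarrow> real set" where
  "Jset n i = (if i = 0 then {0..1/real n} else {0..real (Suc i)/real n} - {0..real i/real n})"

lemma Jset_sets[measurable]: "Jset n i \<in> sets lborel"
  unfolding Jset_def by auto

lemma Jset_sub:
  assumes "i < n"
  shows "Jset n i \<subseteq> {real i/real n .. real (Suc i)/real n}" "Jset n i \<subseteq> {0..1}"
proof -
  have n: "real n > 0" using assms by simp
  have le1: "real (Suc i)/real n \<le> 1" using assms n by (simp add: field_simps)
  show 1: "Jset n i \<subseteq> {real i/real n .. real (Suc i)/real n}"
    unfolding Jset_def by (auto simp: n)
  have z: "0 \<le> real i / real n" by simp
  show "Jset n i \<subseteq> {0..1}"
  proof
    fix x assume "x \<in> Jset n i"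
    then have "x \<in> {real i/real n .. real (Suc i)/real n}" using 1 by blast
    then have a: "real i/real n \<le> x" and b: "x \<le> real (Suc i)/real n" unfolding atLeastAtMost_iff by blast+
    have "0 \<le> x" using z a by (rule order_trans)
    moreover have "x \<le> 1" using b le1 by (rule order_trans)
    ultimately show "x \<in> {0..1}" by simp
  qed
qed

lemma sub_int:
  fixes h :: "real \<Rightarrow> real"
  assumes "integrable lborel (\<lambda>x. indicator {0..1::real} x * h x)" "A \<subseteq> {0..1}" "A \<in> sets lborel"
  shows "integrable lborel (\<lambda>x. indicator A x * h x)"
proof -
  have "integrable lborel (\<lambda>x. indicator A x *\<^sub>R (indicator {0..1::real} x * h x))"
    by (rule integrable_mult_indicator[OF assms(3,1)])
  moreover have "(\<lambda>x. indicator A x *\<^sub>R (indicator {0..1::real} x * h x)) = (\<lambda>x. indicator A x * h x)"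
    using assms(2) by (intro ext) (auto split: split_indicator)
  ultimately show ?thesis by simp
qed

lemma partition_int:
  fixes h :: "real \<Rightarrow> real"
  assumes h: "integrable lborel (\<lambda>x. indicator {0..1::real} x * h x)" and n: "n \<ge> 1"
  defines "G \<equiv> \<lambda>m. if m = 0 then 0 else integral\<^sup>L lborel (\<lambda>x. indicator {0..real m/real n} x * h x)"
  shows "\<And>i. i < n \<Longrightarrow> integral\<^sup>L lborel (\<lambda>x. indicator (Jset n i) x * h x) = G (Suc i) - G i"
    and "integral\<^sup>L lborel (\<lambda>x. indicator {0..1::real} x * h x) =
         (\<Sum>i<n. integral\<^sup>L lborel (\<lambda>x. indicator (Jset n i) x * h x))"
proof -
  have np: "real n > 0" using n by simp
  show 1: "integral\<^sup>L lborel (\<lambda>x. indicator (Jset n i) x * h x) = G (Suc i) - G i" if i: "i < n" for i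
  proof (cases "i = 0")
    case True
    then show ?thesis by (simp add: G_def Jset_def)
  next
    case False
    have sub1: "{0..real m/real n} \<subseteq> {0..1}" if "m \<le> n" for m
      using that np by (auto simp: field_simps)
    have "(\<lambda>x. indicator {0..real (Suc i)/real n} x * h x) =
          (\<lambda>x. indicator {0..real i/real n} x * h x + indicator (Jset n i) x * h x)"
    proof
      fix x
      have "real i / real n \<le> real (Suc i) / real n" using np by (simp add: divide_right_mono)
      then show "indicator {0..real (Suc i)/real n} x * h x =
          indicator {0..real i/real n} x * h x + indicator (Jset n i) x * h x"
        using False unfolding Jset_def by (auto split: split_indicator)
    qed
    then have "G (Suc i) = G i + integral\<^sup>L lborel (\<lambda>x. indicator (Jset n i) x * h x)"
      unfolding G_def using False
      apply simp
      apply (subst Bochner_Integration.integral_add)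
      using sub_int[OF h sub1] sub_int[OF h Jset_sub(2)[OF i] Jset_sets] i by auto
    then show ?thesis by simp
  qed
  have "(\<Sum>i<n. integral\<^sup>L lborel (\<lambda>x. indicator (Jset n i) x * h x)) = (\<Sum>i<n. G (Suc i) - G i)"
    using 1 by simp
  also have "\<dots> = G n - G 0" by (rule sum_lessThan_telescope)
  also have "\<dots> = integral\<^sup>L lborel (\<lambda>x. indicator {0..1::real} x * h x)"
    using n np by (simp add: G_def)
  finally show "integral\<^sup>L lborel (\<lambda>x. indicator {0..1::real} x * h x) =
         (\<Sum>i<n. integral\<^sup>L lborel (\<lambda>x. indicator (Jset n i) x * h x))" by simp
qed


lemma amgm_abs:
  fixes t q :: real
  assumes "t > 0"
  shows "\<bar>q\<bar> \<le> (t * q\<^sup>2 + 1/t) / 2"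
proof -
  have "2 * (t * \<bar>q\<bar>) * 1 \<le> (t * \<bar>q\<bar>)\<^sup>2 + 1\<^sup>2" by (rule sum_squares_bound)
  moreover have "t * (t * q\<^sup>2 + 1/t) = (t * \<bar>q\<bar>)\<^sup>2 + 1\<^sup>2"
    using assms by (simp add: algebra_simps power2_eq_square)
  ultimately have "t * (2 * \<bar>q\<bar>) \<le> t * (t * q\<^sup>2 + 1/t)" by (simp add: mult_ac)
  then have "2 * \<bar>q\<bar> \<le> t * q\<^sup>2 + 1/t" using assms by (simp add: mult_le_cancel_left_pos)
  then show ?thesis by simp
qed

lemma H_bound:
  fixes Q :: "real \<Rightarrow> real"
  assumes Qi: "integrable lborel (\<lambda>x. indicator {0..1::real} x * (Q x)\<^sup>2)"
    and S: "integral\<^sup>L lborel (\<lambda>x. indicator {0..1::real} x * (Q x)\<^sup>2) \<le> K * real n"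
    and K: "K > 0" and i: "i < n"
  defines "t \<equiv> 1 / (real n * sqrt K)"
  defines "H \<equiv> \<lambda>x. t/2 * (indicator {0..1::real} x * (Q x)\<^sup>2) + 1/(2*t) * indicator {real i/real n..real (Suc i)/real n} x"
  shows "integrable lborel H" "integral\<^sup>L lborel H \<le> sqrt K"
    "\<And>x. \<bar>indicator (Jset n i) x * Q x\<bar> \<le> H x" "\<And>x. 0 \<le> H x"
proof -
  have np: "real n > 0" using i by simp
  have sK: "sqrt K > 0" using K by simp
  have t: "t > 0" unfolding t_def using np sK by simp
  have Ii: "integrable lborel (indicat_real {real i/real n..real (Suc i)/real n})"
    by (rule integrable_real_indicator) (auto simp: emeasure_lborel_Icc_eq)
  show "integrable lborel H" unfolding H_def
    using Qi Ii by (intro Bochner_Integration.integrable_add integrable_mult_right)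
  have "integral\<^sup>L lborel H = t/2 * integral\<^sup>L lborel (\<lambda>x. indicator {0..1::real} x * (Q x)\<^sup>2)
      + 1/(2*t) * (1 / real n)"
  proof -
    have le: "real i/real n \<le> real (Suc i)/real n" using np by (simp add: divide_right_mono)
    have m: "measure lborel {real i/real n..real (Suc i)/real n} = 1 / real n"
      using le by (simp add: diff_divide_distrib[symmetric])
    show ?thesis unfolding H_def using Qi Ii le np
      by (simp add: Bochner_Integration.integral_add integrable_mult_right m del: of_nat_Suc)
        (simp add: diff_divide_distrib[symmetric])
  qed
  also have "\<dots> \<le> t/2 * (K * real n) + 1/(2*t) * (1 / real n)"
    using S t by (intro add_right_mono mult_left_mono) auto
  also have "\<dots> = sqrt K"
    unfolding t_def using np sK K by (simp add: field_simps real_sqrt_mult_self del: real_sqrt_mult_self) (simp add: power2_eq_square[symmetric])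
  finally show "integral\<^sup>L lborel H \<le> sqrt K" .
  show "0 \<le> H x" for x unfolding H_def using t by (auto split: split_indicator)
  show "\<bar>indicator (Jset n i) x * Q x\<bar> \<le> H x" for x
  proof (cases "x \<in> Jset n i")
    case True
    then have "x \<in> {0..1}" "x \<in> {real i/real n..real (Suc i)/real n}" using Jset_sub[OF i] by blast+
    then have "H x = (t * (Q x)\<^sup>2 + 1/t) / 2" unfolding H_def by (simp add: field_simps)
    then show ?thesis using True amgm_abs[OF t, of "Q x"] by simp
  next
    case False
    then show ?thesis using \<open>0 \<le> H x\<close> by simp
  qed
qed


lemma abel_sum:
  fixes g F :: "nat \<Rightarrow> real"
  shows "(\<Sum>i<Suc p. g i * (F (Suc i) - F i)) = g p * F (Suc p) - g 0 * F 0 - (\<Sum>i<p. F (Suc i) * (g (Suc i) - g i))"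
  by (induction p) (simp_all add: algebra_simps)

lemma E_bound:
  fixes f Q :: "real \<Rightarrow> real"
  assumes Qi1: "integrable lborel (\<lambda>x. indicator {0..1::real} x * Q x)"
    and Qi: "integrable lborel (\<lambda>x. indicator {0..1::real} x * (Q x)\<^sup>2)"
    and S: "integral\<^sup>L lborel (\<lambda>x. indicator {0..1::real} x * (Q x)\<^sup>2) \<le> K * real n"
    and K: "K > 0" and i: "i < n"
    and fQ: "integrable lborel (\<lambda>x. indicator {0..1::real} x * (f x * Q x))"
    and vmono: "\<And>x y. 0 \<le> x \<Longrightarrow> x \<le> y \<Longrightarrow> y \<le> 1 \<Longrightarrow> v x + \<bar>f y - f x\<bar> \<le> v y"
  shows "\<bar>integral\<^sup>L lborel (\<lambda>x. indicator (Jset n i) x * (f x * Q x))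
          - f (real (Suc i)/real n) * integral\<^sup>L lborel (\<lambda>x. indicator (Jset n i) x * Q x)\<bar>
        \<le> (v (real (Suc i)/real n) - v (real i/real n)) * sqrt K"
    and "\<bar>integral\<^sup>L lborel (\<lambda>x. indicator (Jset n i) x * Q x)\<bar> \<le> sqrt K"
proof -
  define c where "c = f (real (Suc i)/real n)"
  define w where "w = v (real (Suc i)/real n) - v (real i/real n)"
  define t where "t = 1 / (real n * sqrt K)"
  define H where "H = (\<lambda>x. t/2 * (indicator {0..1::real} x * (Q x)\<^sup>2) + 1/(2*t) * indicator {real i/real n..real (Suc i)/real n} x)"
  have HB1: "integrable lborel H" unfolding H_def t_def by (rule H_bound(1)[OF Qi S K i])
  have HB2: "integral\<^sup>L lborel H \<le> sqrt K" unfolding H_def t_def by (rule H_bound(2)[OF Qi S K i])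
  have HB3: "\<bar>indicator (Jset n i) x * Q x\<bar> \<le> H x" for x unfolding H_def t_def by (rule H_bound(3)[OF Qi S K i])
  have HB4: "0 \<le> H x" for x unfolding H_def t_def by (rule H_bound(4)[OF Qi S K i])
  note HB = HB1 HB2 HB3 HB4
  have np: "real n > 0" using i by simp
  have le: "real i/real n \<le> real (Suc i)/real n" using np by (simp add: divide_right_mono)
  have le1: "real (Suc i)/real n \<le> 1" using i np by (simp add: field_simps)
  have z: "0 \<le> real i/real n" by simp
  have w0: "0 \<le> w" unfolding w_def using vmono[OF z le le1] by simp
  have I1: "integrable lborel (\<lambda>x. indicator (Jset n i) x * (f x * Q x))"
    using sub_int[OF fQ Jset_sub(2)[OF i] Jset_sets] .
  have I2: "integrable lborel (\<lambda>x. indicator (Jset n i) x * Q x)"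
    using sub_int[OF Qi1 Jset_sub(2)[OF i] Jset_sets] .
  have eq: "integral\<^sup>L lborel (\<lambda>x. indicator (Jset n i) x * (f x * Q x)) - c * integral\<^sup>L lborel (\<lambda>x. indicator (Jset n i) x * Q x)
      = integral\<^sup>L lborel (\<lambda>x. indicator (Jset n i) x * (f x * Q x) - c * (indicator (Jset n i) x * Q x))"
    using I1 I2 by (simp add: Bochner_Integration.integral_diff)
  have I3: "integrable lborel (\<lambda>x. indicator (Jset n i) x * (f x * Q x) - c * (indicator (Jset n i) x * Q x))"
    using I1 I2 by (intro Bochner_Integration.integrable_diff integrable_mult_right)
  have pw: "\<bar>indicator (Jset n i) x * (f x * Q x) - c * (indicator (Jset n i) x * Q x)\<bar> \<le> w * H x" for x
  proof (cases "x \<in> Jset n i")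
    case True
    then have x: "real i/real n \<le> x" "x \<le> real (Suc i)/real n" using Jset_sub(1)[OF i] by auto
    have x0: "0 \<le> x" using z x(1) by (rule order_trans)
    have "v (real i/real n) \<le> v x" using vmono[OF z x(1)] x(2) le1 by simp
    moreover have "v x + \<bar>c - f x\<bar> \<le> v (real (Suc i)/real n)"
      unfolding c_def using vmono[OF x0 x(2) le1] .
    ultimately have fc: "\<bar>f x - c\<bar> \<le> w" unfolding w_def by simp
    have "\<bar>indicator (Jset n i) x * (f x * Q x) - c * (indicator (Jset n i) x * Q x)\<bar>
        = \<bar>f x - c\<bar> * \<bar>indicator (Jset n i) x * Q x\<bar>"
      by (simp add: abs_mult[symmetric] algebra_simps)
    also have "\<dots> \<le> w * H x" using fc HB(3)[of x] by (intro mult_mono) auto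
    finally show ?thesis .
  next
    case False
    then show ?thesis using w0 HB(4)[of x] by simp
  qed
  have "\<bar>integral\<^sup>L lborel (\<lambda>x. indicator (Jset n i) x * (f x * Q x) - c * (indicator (Jset n i) x * Q x))\<bar>
     \<le> integral\<^sup>L lborel (\<lambda>x. \<bar>indicator (Jset n i) x * (f x * Q x) - c * (indicator (Jset n i) x * Q x)\<bar>)"
    by (rule integral_abs_bound)
  also have "\<dots> \<le> integral\<^sup>L lborel (\<lambda>x. w * H x)"
    using I3 HB(1) pw by (intro integral_mono integrable_mult_right) auto
  also have "\<dots> = w * integral\<^sup>L lborel H" by simp
  also have "\<dots> \<le> w * sqrt K" using HB(2) w0 by (rule mult_left_mono)
  finally show "\<bar>integral\<^sup>L lborel (\<lambda>x. indicator (Jset n i) x * (f x * Q x))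
          - f (real (Suc i)/real n) * integral\<^sup>L lborel (\<lambda>x. indicator (Jset n i) x * Q x)\<bar>
        \<le> (v (real (Suc i)/real n) - v (real i/real n)) * sqrt K"
    using eq unfolding c_def w_def by (simp add: mult.commute)
  have "\<bar>integral\<^sup>L lborel (\<lambda>x. indicator (Jset n i) x * Q x)\<bar> \<le> integral\<^sup>L lborel (\<lambda>x. \<bar>indicator (Jset n i) x * Q x\<bar>)"
    by (rule integral_abs_bound)
  also have "\<dots> \<le> integral\<^sup>L lborel H"
    using I2 HB(1) HB(3) by (intro integral_mono) auto
  finally show "\<bar>integral\<^sup>L lborel (\<lambda>x. indicator (Jset n i) x * Q x)\<bar> \<le> sqrt K" using HB(2) by simp
qed


lemma main_est:
  fixes f Q v :: "real \<Rightarrow> real"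
  assumes Qi1: "integrable lborel (\<lambda>x. indicator {0..1::real} x * Q x)"
    and Qi: "integrable lborel (\<lambda>x. indicator {0..1::real} x * (Q x)\<^sup>2)"
    and S: "integral\<^sup>L lborel (\<lambda>x. indicator {0..1::real} x * (Q x)\<^sup>2) \<le> K * real n"
    and K: "K > 0" and n: "n \<ge> 2"
    and fQ: "integrable lborel (\<lambda>x. indicator {0..1::real} x * (f x * Q x))"
    and B: "\<And>i. 1 \<le> i \<Longrightarrow> i < n \<Longrightarrow> \<bar>integral\<^sup>L lborel (\<lambda>x. indicator {0..real i/real n} x * Q x)\<bar> \<le> B"
    and vmono: "\<And>x y. 0 \<le> x \<Longrightarrow> x \<le> y \<Longrightarrow> y \<le> 1 \<Longrightarrow> v x + \<bar>f y - f x\<bar> \<le> v y"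
    and v0: "\<And>t. t \<le> 1 \<Longrightarrow> 0 \<le> v t" and vV: "\<And>t. t \<le> 1 \<Longrightarrow> v t \<le> V"
  shows "\<bar>integral\<^sup>L lborel (\<lambda>x. indicator {0..1::real} x * (f x * Q x))\<bar>
     \<le> \<bar>f 1\<bar> * (B + sqrt K) + B * V + V * sqrt K"
proof -
  obtain p where p: "n = Suc p" "p \<ge> 1" using n by (cases n) auto
  have n1: "n \<ge> 1" using n by simp
  have np: "real n > 0" using n by simp
  define F where "F = (\<lambda>m. if m = 0 then 0 else integral\<^sup>L lborel (\<lambda>x. indicator {0..real m/real n} x * Q x))"
  define Jf where "Jf = (\<lambda>i. integral\<^sup>L lborel (\<lambda>x. indicator (Jset n i) x * (f x * Q x)))"
  define JQ where "JQ = (\<lambda>i. integral\<^sup>L lborel (\<lambda>x. indicator (Jset n i) x * Q x))"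
  define r where "r = (\<lambda>i. real (Suc i) / real n)"
  define E where "E = (\<lambda>i. Jf i - f (r i) * JQ i)"
  define u where "u = (\<lambda>m. v (real m / real n))"
  have P1: "integral\<^sup>L lborel (\<lambda>x. indicator {0..1::real} x * (f x * Q x)) = (\<Sum>i<n. Jf i)"
    unfolding Jf_def using partition_int(2)[OF fQ n1] by simp
  have P2: "JQ i = F (Suc i) - F i" if "i < n" for i
    unfolding JQ_def F_def using partition_int(1)[OF Qi1 n1 that] by simp
  have "(\<Sum>i<n. Jf i) = (\<Sum>i<n. E i) + (\<Sum>i<n. f (r i) * JQ i)"
    unfolding E_def by (simp add: sum.distrib[symmetric])
  also have "(\<Sum>i<n. f (r i) * JQ i) = (\<Sum>i<Suc p. f (r i) * (F (Suc i) - F i))"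
    using P2 p(1) by simp
  also have "\<dots> = f (r p) * F (Suc p) - f (r 0) * F 0 - (\<Sum>i<p. F (Suc i) * (f (r (Suc i)) - f (r i)))"
    by (rule abel_sum)
  finally have U: "integral\<^sup>L lborel (\<lambda>x. indicator {0..1::real} x * (f x * Q x)) =
     (\<Sum>i<n. E i) + (f 1 * F n - (\<Sum>i<p. F (Suc i) * (f (r (Suc i)) - f (r i))))"
    using P1 p np by (simp add: F_def r_def)
  have E_le: "\<bar>E i\<bar> \<le> (u (Suc i) - u i) * sqrt K" if "i < n" for i
    using E_bound(1)[OF Qi1 Qi S K that fQ vmono] unfolding E_def Jf_def JQ_def r_def u_def by simp
  have "\<bar>\<Sum>i<n. E i\<bar> \<le> (\<Sum>i<n. \<bar>E i\<bar>)" by (rule sum_abs)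
  also have "\<dots> \<le> (\<Sum>i<n. (u (Suc i) - u i) * sqrt K)" using E_le by (intro sum_mono) auto
  also have "\<dots> = (u n - u 0) * sqrt K" by (simp add: sum_distrib_right[symmetric] sum_lessThan_telescope)
  also have "\<dots> \<le> V * sqrt K"
  proof -
    have "u n \<le> V" unfolding u_def using vV np by simp
    moreover have "0 \<le> u 0" unfolding u_def using v0 by simp
    ultimately show ?thesis using K by (intro mult_right_mono) auto
  qed
  finally have b1: "\<bar>\<Sum>i<n. E i\<bar> \<le> V * sqrt K" .
  have Fp: "\<bar>F p\<bar> \<le> B" using B[of p] p unfolding F_def by simp
  have B0: "0 \<le> B" using Fp by linarith
  have JQp: "\<bar>JQ p\<bar> \<le> sqrt K" unfolding JQ_def using E_bound(2)[OF Qi1 Qi S K _ fQ vmono, of p] p by simp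
  have "F n = F p + JQ p" using P2[of p] p by simp
  then have Fn: "\<bar>F n\<bar> \<le> B + sqrt K" using Fp JQp by linarith
  have "\<bar>f 1 * F n\<bar> \<le> \<bar>f 1\<bar> * (B + sqrt K)" using Fn by (simp add: abs_mult mult_left_mono)
  have step: "\<bar>F (Suc i) * (f (r (Suc i)) - f (r i))\<bar> \<le> B * (u (Suc (Suc i)) - u (Suc i))" if "i < p" for i
  proof -
    have FB: "\<bar>F (Suc i)\<bar> \<le> B" using B[of "Suc i"] that p unfolding F_def by simp
    have r0: "0 \<le> r i" unfolding r_def by simp
    have rle: "r i \<le> r (Suc i)" unfolding r_def using np by (simp add: divide_right_mono)
    have r1: "r (Suc i) \<le> 1" unfolding r_def using that p np by (simp add: field_simps)
    have "\<bar>f (r (Suc i)) - f (r i)\<bar> \<le> u (Suc (Suc i)) - u (Suc i)"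
      using vmono[OF r0 rle r1] unfolding u_def r_def by simp
    then show ?thesis unfolding abs_mult using FB B0 by (intro mult_mono) auto
  qed
  have "\<bar>\<Sum>i<p. F (Suc i) * (f (r (Suc i)) - f (r i))\<bar> \<le> (\<Sum>i<p. \<bar>F (Suc i) * (f (r (Suc i)) - f (r i))\<bar>)"
    by (rule sum_abs)
  also have "\<dots> \<le> (\<Sum>i<p. B * (u (Suc (Suc i)) - u (Suc i)))" using step by (intro sum_mono) auto
  also have "\<dots> = B * (u (Suc p) - u 1)"
    using sum_lessThan_telescope[of "\<lambda>j. u (Suc j)" p] by (simp add: sum_distrib_left[symmetric])
  also have "\<dots> \<le> B * V"
  proof -
    have "u (Suc p) \<le> V" unfolding u_def using vV np p by simp
    moreover have "0 \<le> u 1" unfolding u_def using v0 n by simp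
    ultimately show ?thesis using B0 by (intro mult_left_mono) auto
  qed
  finally have b3: "\<bar>\<Sum>i<p. F (Suc i) * (f (r (Suc i)) - f (r i))\<bar> \<le> B * V" .
  show ?thesis unfolding U using b1 b3 \<open>\<bar>f 1 * F n\<bar> \<le> \<bar>f 1\<bar> * (B + sqrt K)\<close> by linarith
qed


theorem theorem1:
  fixes \<phi> :: "nat \<Rightarrow> real \<Rightarrow> real" and d :: "nat \<Rightarrow> real"
  assumes "ONS01 \<phi>"
    and "d \<in> O(\<lambda>n. sqrt (real n) / (ln (real n + 1))\<^sup>2)"
    and "\<forall>a\<in>ell2. (\<lambda>n. Bfun \<phi> d a n) \<in> O(\<lambda>_. 1)"
  shows "\<forall>f a. BV01 f \<and> a \<in> ell2 \<longrightarrow>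
           limsup (\<lambda>n. ereal \<bar>Ufun \<phi> d a n f\<bar>) < \<infinity>"
proof (intro allI impI)
  fix f and a :: "nat \<Rightarrow> real"
  assume fa: "BV01 f \<and> a \<in> ell2"
  obtain V where v0: "\<And>t. t \<le> 1 \<Longrightarrow> 0 \<le> vf f t" and vV: "\<And>t. t \<le> 1 \<Longrightarrow> vf f t \<le> V"
    and vmono: "\<And>x y. 0 \<le> x \<Longrightarrow> x \<le> y \<Longrightarrow> y \<le> 1 \<Longrightarrow> vf f x + \<bar>f y - f x\<bar> \<le> vf f y"
    using vf_props[of f] fa by blast
  have V0: "0 \<le> V" using v0[of 0] vV[of 0] by simp
  obtain K where K: "K > 0" "\<And>n. (\<Sum>k=1..n. (d k * a k * ln (real k))\<^sup>2) \<le> K * real n"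
    using sumsq_bound[OF assms(2)] fa by blast
  have "(\<lambda>n. Bfun \<phi> d a n) \<in> O(\<lambda>_. 1)" using assms(3) fa by blast
  then obtain cB where cB: "cB > 0" "eventually (\<lambda>n. norm (Bfun \<phi> d a n) \<le> cB * norm (1::real)) at_top"
    by (rule landau_o.bigE)
  then obtain N where N: "\<And>n. n \<ge> N \<Longrightarrow> \<bar>Bfun \<phi> d a n\<bar> \<le> cB"
    unfolding eventually_at_top_linorder by auto
  define M where "M = \<bar>f 1\<bar> * (cB + sqrt K) + cB * V + V * sqrt K"
  have M0: "0 \<le> M" unfolding M_def using cB(1) V0 K(1) by simp
  have bound: "\<bar>Ufun \<phi> d a n f\<bar> \<le> M" if n: "n \<ge> max 2 N" for n
  proof -
    define Q where "Q = Qfun \<phi> d a n"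
    have U: "Ufun \<phi> d a n f = integral\<^sup>L lborel (\<lambda>x. indicator {0..1::real} x * (f x * Q x))"
      unfolding Ufun_def Q_def set_lebesgue_integral_def by simp
    show ?thesis
    proof (cases "integrable lborel (\<lambda>x. indicator {0..1::real} x * (f x * Q x))")
      case False
      then show ?thesis unfolding U using M0 by (simp add: not_integrable_integral_eq)
    next
      case True
      have n2: "n \<ge> 2" using n by simp
      have Bi: "\<bar>integral\<^sup>L lborel (\<lambda>x. indicator {0..real i/real n} x * Q x)\<bar> \<le> cB"
        if i: "1 \<le> i" "i < n" for i
      proof -
        have "\<bar>integral\<^sup>L lborel (\<lambda>x. indicator {0..real i/real n} x * Q x)\<bar> \<le> Bfun \<phi> d a n"
          unfolding Bfun_def Q_def set_lebesgue_integral_def using n2 i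
          by simp
        also have "\<dots> \<le> cB" using N[of n] n by simp
        finally show ?thesis .
      qed
      have S: "integral\<^sup>L lborel (\<lambda>x. indicator {0..1::real} x * (Q x)\<^sup>2) \<le> K * real n"
        unfolding Q_def using Q_sq(2)[OF assms(1), of d a n] K(2)[of n] by simp
      show ?thesis unfolding U M_def
        by (rule main_est[OF Q_int[OF assms(1)] Q_sq(1)[OF assms(1)] S[unfolded Q_def] K(1) n2
              True[unfolded Q_def] Bi[unfolded Q_def] vmono v0 vV, folded Q_def])
    qed
  qed
  have "limsup (\<lambda>n. ereal \<bar>Ufun \<phi> d a n f\<bar>) \<le> ereal M"
  proof (rule Limsup_bounded)
    show "eventually (\<lambda>n. ereal \<bar>Ufun \<phi> d a n f\<bar> \<le> ereal M) sequentially"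
      unfolding eventually_at_top_linorder using bound by (intro exI[of _ "max 2 N"]) auto
  qed
  then show "limsup (\<lambda>n. ereal \<bar>Ufun \<phi> d a n f\<bar>) < \<infinity>"
    using order.strict_trans1[of _ "ereal M" \<infinity>] by simp
qed

end
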